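(* Define, for $x\in\mathcal N$, $$f(x)=\mathbb{E}_x[V(x-D+\xi)]-\mathbb{E}_x[V(x-D)] = \sum_{d=0}^x\tbinom{x}{d}\big(\tfrac qx\big)^d\big(1-\tfrac qx\big)^{x-d}\,p\,\big(V(x+1-d)-V(x-d)\big).$$ Then $f(x+1)-f(x)\ge0$ for all $x\in\mathcal N$, i.e. $f$ is nondecreasing.
   Context: Single-server problem: Bernoulli($p$) arrivals $\xi$, departures $D\sim\mathrm{Binomial}(x,q/x)$ given state $x\ge1$ (no departures at $x=0$), queue $X_{t+1}=X_t-D_{t+1}+\nu_t\xi_{t+1}$, $\nu\in\{0,1\}$; $C>0$, $1>q>2p>0$, $\lambda\in\mathbb R$, cost $c(x,\nu)=Cx+(1-\nu)\lambda$. $V$ is the average-cost relative value function solving $V(x)=Cx-\beta+\min\big(\mathbb{E}_x[pV(x-D+1)+(1-p)V(x-D)],\ \lambda+\mathbb{E}_x[V(x-D)]\big)$, $V(0)=0$; $V$ is nondecreasing and has increasing differences ($V(x+z)-V(x)\ge V(y+z)-V(y)$ for $z>0$, $x>y$). *)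

theory Defs
  imports Complex_Main
begin

text \<open>Expectation E_x[g(x - D)] where D ~ Binomial(x, q/x) given state x.
  For x = 0 this is g 0 (no departures), since q/0 = 0 and 0^0 = 1.\<close>
definition Ex_dep :: "real \<Rightarrow> nat \<Rightarrow> (nat \<Rightarrow> real) \<Rightarrow> real" where
  "Ex_dep q x g = (\<Sum>d = 0..x. real (x choose d) * (q / real x) ^ d
                       * (1 - q / real x) ^ (x - d) * g (x - d))"

definition bellman :: "real \<Rightarrow> real \<Rightarrow> real \<Rightarrow> real \<Rightarrow> real \<Rightarrow> (nat \<Rightarrow> real) \<Rightarrow> bool" where
  "bellman p q C lam beta V \<longleftrightarrow>
     (\<forall>x. V x = C * real x - beta +
        min (Ex_dep q x (\<lambda>y. p * V (y + 1) + (1 - p) * V y))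
            (lam + Ex_dep q x V))"

text \<open>f(x) = E_x[V(x - D + xi)] - E_x[V(x - D)], xi ~ Bernoulli(p) independent of D.\<close>
definition f_diff :: "real \<Rightarrow> real \<Rightarrow> (nat \<Rightarrow> real) \<Rightarrow> nat \<Rightarrow> real" where
  "f_diff p q V x = Ex_dep q x (\<lambda>y. p * V (y + 1) + (1 - p) * V y) - Ex_dep q x V"

end

theory Submission
  imports Defs
begin

definition H :: "nat \<Rightarrow> real \<Rightarrow> (nat \<Rightarrow> real) \<Rightarrow> real" where
  "H n r g = (\<Sum>d\<le>n. real (n choose d) * r ^ d * (1 - r) ^ (n - d) * g (n - d))"

lemma H0: "H 0 r g = g 0" by (simp add: H_def)

lemma H_rec: "H (Suc n) r g = (1 - r) * H n r (\<lambda>y. g (Suc y)) + r * H n r g"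
proof -
  define T where "T m d = real (m choose d) * r ^ d * (1 - r) ^ (m - d) * g (m - d)" for m d
  define S2 where "S2 = (\<Sum>d\<le>n. real (n choose Suc d) * r ^ Suc d * (1 - r) ^ (n - d) * g (n - d))"
  have e1: "H (Suc n) r g = T (Suc n) 0 + (\<Sum>d\<le>n. T (Suc n) (Suc d))"
    unfolding H_def T_def by (rule sum.atMost_Suc_shift)
  have e2: "T (Suc n) (Suc d) = r * T n d + real (n choose Suc d) * r ^ Suc d * (1 - r) ^ (n - d) * g (n - d)" for d
    unfolding T_def by (simp add: algebra_simps)
  have e12: "H (Suc n) r g = T (Suc n) 0 + r * H n r g + S2"
  proof -
    have "(\<Sum>d\<le>n. T (Suc n) (Suc d)) = (\<Sum>d\<le>n. r * T n d) + S2"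
      unfolding e2 sum.distrib S2_def ..
    also have "(\<Sum>d\<le>n. r * T n d) = r * H n r g"
      unfolding H_def T_def by (simp add: sum_distrib_left)
    finally show ?thesis using e1 by simp
  qed
  have e3: "(1 - r) * H n r (\<lambda>y. g (Suc y)) = (\<Sum>d\<le>n. real (n choose d) * r ^ d * (1 - r) ^ (Suc n - d) * g (Suc n - d))"
    unfolding H_def sum_distrib_left
  proof (rule sum.cong[OF refl])
    fix d assume "d \<in> {..n}"
    then have "d \<le> n" by simp
    then have "Suc n - d = Suc (n - d)" by (simp add: Suc_diff_le)
    then show "(1 - r) * (real (n choose d) * r ^ d * (1 - r) ^ (n - d) * g (Suc (n - d))) =
      real (n choose d) * r ^ d * (1 - r) ^ (Suc n - d) * g (Suc n - d)" by simp
  qed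
  have e4: "(\<Sum>d\<le>n. real (n choose d) * r ^ d * (1 - r) ^ (Suc n - d) * g (Suc n - d))
      = (\<Sum>d\<le>Suc n. real (n choose d) * r ^ d * (1 - r) ^ (Suc n - d) * g (Suc n - d))"
    by simp
  have e5: "(\<Sum>d\<le>Suc n. real (n choose d) * r ^ d * (1 - r) ^ (Suc n - d) * g (Suc n - d))
      = T (Suc n) 0 + S2"
    unfolding S2_def T_def by (subst sum.atMost_Suc_shift) simp
  show ?thesis using e12 e3 e4 e5 by linarith
qed

lemma H_mono_g:
  assumes "0 \<le> r" "r \<le> 1" "\<And>y. g y \<le> g' y"
  shows "H n r g \<le> H n r g'"
  unfolding H_def
proof (rule sum_mono)
  fix d
  have "0 \<le> real (n choose d) * r ^ d * (1 - r) ^ (n - d)" using assms by simp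
  then show "real (n choose d) * r ^ d * (1 - r) ^ (n - d) * g (n - d)
    \<le> real (n choose d) * r ^ d * (1 - r) ^ (n - d) * g' (n - d)"
    using assms(3) by (simp add: mult_left_mono)
qed

lemma H_step:
  assumes "mono g" "0 \<le> r" "r \<le> 1"
  shows "H n r g \<le> H (Suc n) r g"
proof -
  have "H n r g \<le> H n r (\<lambda>y. g (Suc y))"
    using assms by (intro H_mono_g) (auto simp: mono_def)
  then have "(1 - r) * H n r g \<le> (1 - r) * H n r (\<lambda>y. g (Suc y))"
    using assms by (simp add: mult_left_mono)
  then show ?thesis by (simp add: H_rec algebra_simps)
qed

lemma H_r:
  assumes "mono g" "0 \<le> r'" "r' \<le> r" "r \<le> 1"
  shows "H n r g \<le> H n r' g"
  using assms(1)
proof (induction n arbitrary: g)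
  case 0
  then show ?case by (simp add: H0)
next
  case (Suc n)
  have mS: "mono (\<lambda>y. g (Suc y))" using Suc.prems by (auto simp: mono_def)
  define A where "A = H n r (\<lambda>y. g (Suc y))"
  define A' where "A' = H n r' (\<lambda>y. g (Suc y))"
  define B where "B = H n r g"
  define B' where "B' = H n r' g"
  have AA: "A \<le> A'" unfolding A_def A'_def using Suc.IH[OF mS] .
  have BB: "B \<le> B'" unfolding B_def B'_def using Suc.IH[OF Suc.prems] .
  have BA: "B \<le> A" unfolding A_def B_def using Suc.prems assms
    by (intro H_mono_g) (auto simp: mono_def)
  have "(r - r') * (B - A) \<le> 0" using BA assms by (simp add: mult_nonneg_nonpos)
  then have "(1 - r) * A + r * B \<le> (1 - r') * A + r' * B" by (simp add: algebra_simps)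
  also have "\<dots> \<le> (1 - r') * A' + r' * B'"
    using AA BB assms by (intro add_mono mult_left_mono) auto
  finally show ?case unfolding A_def A'_def B_def B'_def by (simp add: H_rec)
qed

theorem mainTheorem7:
  fixes p q C lam beta :: real and V :: "nat \<Rightarrow> real"
  assumes "C > 0" and "0 < 2 * p" and "2 * p < q" and "q < 1"
    and "bellman p q C lam beta V"
    and "V 0 = 0"
    and "mono V"
    and "\<And>x y z. 0 < z \<Longrightarrow> y < x \<Longrightarrow> V (x + z) - V x \<ge> V (y + z) - V y"
  shows "\<forall>x. f_diff p q V (x + 1) - f_diff p q V x \<ge> 0"
proof
  fix x :: nat
  define g where "g y = p * (V (Suc y) - V y)" for y
  have p0: "p > 0" using assms by simp
  have mg: "mono g"
  proof (rule monoI)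
    fix a b :: nat assume "a \<le> b"
    then have "V (Suc a) - V a \<le> V (Suc b) - V b"
      using assms(8)[of 1 a b] by (cases "a = b") auto
    then show "g a \<le> g b" unfolding g_def using p0 by (simp add: mult_left_mono)
  qed
  have fd: "f_diff p q V n = H n (q / real n) g" for n
    unfolding f_diff_def Ex_dep_def H_def atLeast0AtMost sum_subtractf[symmetric]
  proof (rule sum.cong[OF refl])
    fix d
    show "real (n choose d) * (q / real n) ^ d * (1 - q / real n) ^ (n - d) *
          (p * V (n - d + 1) + (1 - p) * V (n - d)) -
          real (n choose d) * (q / real n) ^ d * (1 - q / real n) ^ (n - d) * V (n - d) =
          real (n choose d) * (q / real n) ^ d * (1 - q / real n) ^ (n - d) * g (n - d)"
      unfolding g_def by (simp add: right_diff_distrib ring_distribs)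
  qed
  show "f_diff p q V (x + 1) - f_diff p q V x \<ge> 0"
  proof (cases "x = 0")
    case True
    have "H 0 0 g \<le> H (Suc 0) q g"
      using H_step[OF mg, of q 0] assms by (simp add: H0)
    then have h: "H x (q / real x) g \<le> H (x + 1) (q / real (x + 1)) g" using True by simp
    show ?thesis unfolding fd using h by linarith
  next
    case False
    then have x1: "real x \<ge> 1" by simp
    have q0: "q > 0" using assms by simp
    have r1: "q / real (Suc x) \<le> q / real x" using q0 x1 by (simp add: frac_le)
    have r2: "q / real x \<le> 1" using x1 assms by simp
    have r0: "0 \<le> q / real (Suc x)" using q0 by simp
    have "H x (q / real x) g \<le> H x (q / real (Suc x)) g"
      using H_r[OF mg r0 r1 r2] .
    also have "\<dots> \<le> H (Suc x) (q / real (Suc x)) g"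
      by (rule H_step[OF mg r0]) (use r1 r2 in linarith)
    finally have h: "H x (q / real x) g \<le> H (x + 1) (q / real (x + 1)) g" by simp
    show ?thesis unfolding fd using h by linarith
  qed
qed

end
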